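(* Suppose the hypotheses of Theorem 4 hold (either case (a) or case (b), with $\varepsilon(m,\alpha)$ defined accordingly). Let $B\in\mathbb{N}$ and $\gamma\in(0,\alpha)$. Then $$\liminf_{m\to\infty}\Pr\big[\widehat{\mathrm{pl}}^{\mathrm{boot},S}_{\varepsilon(m,\alpha)}(A)\ge1-\alpha-\gamma\big]\ge1-\alpha-\exp\!\Big(-\frac{6B\gamma^2}{4\gamma+3}\Big),$$ where the probability is over $S\sim\mathcal{D}^m$ and the bootstrap resamples. In particular, if $B\ge(4\gamma+3)\log(\gamma^{-1})/(6\gamma^2)$, then $$\liminf_{m\to\infty}\Pr\big[\widehat{\mathrm{pl}}^{\mathrm{boot},S}_{\varepsilon(m,\alpha-\gamma)}(A)\ge1-\alpha\big]\ge1-\alpha.$$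
   Context: Setting: data are i.i.d. from a distribution $\mathcal{D}$ on $\mathcal{X}\times\mathcal{Y}$; $\mathcal{H}=\{x\mapsto h(x;\theta)\mid\theta\in\Theta\}$ with $\Theta$ a topological space, $L$ a real-valued loss; $R_{\widetilde{\mathcal{D}}}(\theta)=\mathbb{E}_{\widetilde{\mathcal{D}}}[L(h(X;\theta),Y)]$, $R=R_{\mathcal{D}}$ (finite), $\widehat{R}_S(\theta)=\frac1m\sum_{i=1}^mL(h(X_i;\theta),Y_i)$. All events are measurable. $\widehat{\Theta}_S^\varepsilon=\{\theta\mid\widehat{R}_S(\theta)\le\inf_\vartheta\widehat{R}_S(\vartheta)+\varepsilon\}$, $\Theta_0^\delta=\{\theta\mid R(\theta)\le\inf_\vartheta R(\vartheta)+\delta\}$. Strong uniform convergence property: there is $w:\mathbb{R}^+\times\mathbb{R}^+\to\mathbb{R}$ (a "witness") such that for all $\varepsilon,\alpha>0$ and integers $m\ge w(\varepsilon,\alpha)$: (1) $\Pr_{S\sim\mathcal{D}^m}[\sup_\theta|R(\theta)-\widehat{R}_S(\theta)|\le\varepsilon]\ge1-\alpha$ and (2) $\inf_{\widetilde{\mathcal{D}}\in\mathcal{B}_m}\Pr_{S'\sim\widetilde{\mathcal{D}}^m}[\sup_\theta|R_{\widetilde{\mathcal{D}}}(\theta)-\widehat{R}_{S'}(\theta)|\le\varepsilon]\ge1-\alpha$, with $\mathcal{B}_m$ the empirical distributions $\mathrm{Unif}(S)$ of all possible realizations $S$ of $\mathcal{D}^m$; the strong uniform convergence function is $f(\varepsilon,\alpha)=\inf_w\lceil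 w(\varepsilon,\alpha)\rceil$. Hypotheses of Theorem 4: $A\subseteq\Theta$ is Borel with $\Theta_0^\delta\subseteq A$ for some $\delta>0$; $(\mathcal{H},L)$ has the strong uniform convergence property with function $f$; and either (a) a risk minimizer $\theta_0$ exists, an empirical risk minimizer exists for every sample, and $\varepsilon(m,\alpha)=\inf\{\varepsilon>0\mid m\ge f(\varepsilon/2,\alpha)\}$, or (b) $\varepsilon(m,\alpha)=\inf\{\varepsilon>0\mid m\ge\inf_{0<\delta'<\varepsilon}f((\varepsilon-\delta')/2,\alpha)\}$. Bootstrapped plausibility: $\mathrm{pl}^{\mathrm{boot},S}_\varepsilon(A)=\Pr_{S'\sim\mathrm{Unif}(S)^m}[\widehat{\Theta}_{S'}^\varepsilon\cap A\ne\varnothing\mid\widehat{\Theta}_{S'}^\varepsilon\ne\varnothing]$ (assumed well defined). Its Monte Carlo estimate with $B$ resamples is $\widehat{\mathrm{pl}}^{\mathrm{boot},S}_\varepsilon(A)=\frac1B\sum_{i=1}^BI(\widehat{\Theta}_{S_i}^\varepsilon\cap A\ne\varnothing)$, where, given $S$, $S_1,\dots,S_B$ are independent draws from $\mathrm{Unif}(S)^m$ conditioned on $\widehat{\Theta}_{S_i}^\varepsilon\ne\varnothing$. *)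

theory Defs
  imports "HOL-Probability.Probability"
begin

definition loss :: "('x \<Rightarrow> 'p \<Rightarrow> 'o) \<Rightarrow> ('o \<Rightarrow> 'y \<Rightarrow> real) \<Rightarrow> 'p \<Rightarrow> 'x \<times> 'y \<Rightarrow> real" where
  "loss h L \<theta> z = L (h (fst z) \<theta>) (snd z)"

definition risk :: "('x \<times> 'y) measure \<Rightarrow> ('x \<Rightarrow> 'p \<Rightarrow> 'o) \<Rightarrow> ('o \<Rightarrow> 'y \<Rightarrow> real) \<Rightarrow> 'p \<Rightarrow> real" where
  "risk D h L \<theta> = (\<integral>z. loss h L \<theta> z \<partial>D)"

text \<open>Empirical risk of a sample S = (S 0, ..., S (m-1)). It is also the risk under Unif(S).\<close>
definition emp_risk :: "('x \<Rightarrow> 'p \<Rightarrow> 'o) \<Rightarrow> ('o \<Rightarrow> 'y \<Rightarrow> real) \<Rightarrow> nat \<Rightarrow> (nat \<Rightarrow> 'x \<times> 'y) \<Rightarrow> 'p \<Rightarrow> real" where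
  "emp_risk h L m S \<theta> = (\<Sum>i<m. loss h L \<theta> (S i)) / real m"

definition sample_space :: "('x \<times> 'y) measure \<Rightarrow> nat \<Rightarrow> (nat \<Rightarrow> 'x \<times> 'y) measure" where
  "sample_space D m = PiM {..<m} (\<lambda>_. D)"

text \<open>Uniform resampling indices: S' = S o J with J uniform on {..<m}^m has law Unif(S)^m.\<close>
definition resample_pmf :: "nat \<Rightarrow> (nat \<Rightarrow> nat) pmf" where
  "resample_pmf m = Pi_pmf {..<m} 0 (\<lambda>_. pmf_of_set {..<m})"

definition erm_set :: "('x \<Rightarrow> 'p \<Rightarrow> 'o) \<Rightarrow> ('o \<Rightarrow> 'y \<Rightarrow> real) \<Rightarrow> nat \<Rightarrow> (nat \<Rightarrow> 'x \<times> 'y) \<Rightarrow> ereal \<Rightarrow> 'p set" where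
  "erm_set h L m S \<epsilon> =
     {\<theta>. ereal (emp_risk h L m S \<theta>) \<le> (INF \<phi>. ereal (emp_risk h L m S \<phi>)) + \<epsilon>}"

definition risk_set :: "('x \<times> 'y) measure \<Rightarrow> ('x \<Rightarrow> 'p \<Rightarrow> 'o) \<Rightarrow> ('o \<Rightarrow> 'y \<Rightarrow> real) \<Rightarrow> real \<Rightarrow> 'p set" where
  "risk_set D h L \<delta> = {\<theta>. ereal (risk D h L \<theta>) \<le> (INF \<phi>. ereal (risk D h L \<phi>)) + ereal \<delta>}"

definition suc_witness :: "('x \<times> 'y) measure \<Rightarrow> ('x \<Rightarrow> 'p \<Rightarrow> 'o) \<Rightarrow> ('o \<Rightarrow> 'y \<Rightarrow> real)
    \<Rightarrow> (real \<Rightarrow> real \<Rightarrow> real) \<Rightarrow> bool" where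
  "suc_witness D h L w \<longleftrightarrow>
    (\<forall>\<epsilon> \<alpha>. 0 < \<epsilon> \<longrightarrow> 0 < \<alpha> \<longrightarrow> (\<forall>m::nat. 0 < m \<longrightarrow> real m \<ge> w \<epsilon> \<alpha> \<longrightarrow>
       measure (sample_space D m)
         {S \<in> space (sample_space D m). \<forall>\<theta>. \<bar>risk D h L \<theta> - emp_risk h L m S \<theta>\<bar> \<le> \<epsilon>} \<ge> 1 - \<alpha>
     \<and> (\<forall>S \<in> space (sample_space D m).
          measure_pmf.prob (resample_pmf m)
            {J. \<forall>\<theta>. \<bar>emp_risk h L m S \<theta> - emp_risk h L m (S \<circ> J) \<theta>\<bar> \<le> \<epsilon>} \<ge> 1 - \<alpha>)))"

definition strong_uc :: "('x \<times> 'y) measure \<Rightarrow> ('x \<Rightarrow> 'p \<Rightarrow> 'o) \<Rightarrow> ('o \<Rightarrow> 'y \<Rightarrow> real) \<Rightarrow> bool" where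
  "strong_uc D h L \<longleftrightarrow> (\<exists>w. suc_witness D h L w)"

definition suc_fun :: "('x \<times> 'y) measure \<Rightarrow> ('x \<Rightarrow> 'p \<Rightarrow> 'o) \<Rightarrow> ('o \<Rightarrow> 'y \<Rightarrow> real) \<Rightarrow> real \<Rightarrow> real \<Rightarrow> ereal" where
  "suc_fun D h L \<epsilon> \<alpha> = (INF w \<in> {w. suc_witness D h L w}. ereal (real_of_int \<lceil>w \<epsilon> \<alpha>\<rceil>))"

definition eps_a :: "('x \<times> 'y) measure \<Rightarrow> ('x \<Rightarrow> 'p \<Rightarrow> 'o) \<Rightarrow> ('o \<Rightarrow> 'y \<Rightarrow> real) \<Rightarrow> nat \<Rightarrow> real \<Rightarrow> ereal" where
  "eps_a D h L m \<alpha> =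
     Inf (ereal ` {\<epsilon>. 0 < \<epsilon> \<and> ereal (real m) \<ge> suc_fun D h L (\<epsilon> / 2) \<alpha>})"

definition eps_b :: "('x \<times> 'y) measure \<Rightarrow> ('x \<Rightarrow> 'p \<Rightarrow> 'o) \<Rightarrow> ('o \<Rightarrow> 'y \<Rightarrow> real) \<Rightarrow> nat \<Rightarrow> real \<Rightarrow> ereal" where
  "eps_b D h L m \<alpha> =
     Inf (ereal ` {\<epsilon>. 0 < \<epsilon> \<and>
        ereal (real m) \<ge> (INF \<delta>' \<in> {0<..<\<epsilon>}. suc_fun D h L ((\<epsilon> - \<delta>') / 2) \<alpha>)})"

definition boot_event :: "('x \<Rightarrow> 'p \<Rightarrow> 'o) \<Rightarrow> ('o \<Rightarrow> 'y \<Rightarrow> real) \<Rightarrow> nat \<Rightarrow> (nat \<Rightarrow> 'x \<times> 'y) \<Rightarrow> ereal \<Rightarrow> (nat \<Rightarrow> nat) set" where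
  "boot_event h L m S \<epsilon> = {J. erm_set h L m (S \<circ> J) \<epsilon> \<noteq> {}}"

definition boot_pmf :: "('x \<Rightarrow> 'p \<Rightarrow> 'o) \<Rightarrow> ('o \<Rightarrow> 'y \<Rightarrow> real) \<Rightarrow> nat \<Rightarrow> (nat \<Rightarrow> 'x \<times> 'y) \<Rightarrow> ereal \<Rightarrow> (nat \<Rightarrow> nat) pmf" where
  "boot_pmf h L m S \<epsilon> = cond_pmf (resample_pmf m) (boot_event h L m S \<epsilon>)"

definition pl_boot :: "('x \<Rightarrow> 'p \<Rightarrow> 'o) \<Rightarrow> ('o \<Rightarrow> 'y \<Rightarrow> real) \<Rightarrow> 'p set \<Rightarrow> nat \<Rightarrow> (nat \<Rightarrow> 'x \<times> 'y) \<Rightarrow> ereal \<Rightarrow> real" where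
  "pl_boot h L A m S \<epsilon> =
     measure_pmf.prob (boot_pmf h L m S \<epsilon>) {J. erm_set h L m (S \<circ> J) \<epsilon> \<inter> A \<noteq> {}}"

definition mc_pmf :: "('x \<Rightarrow> 'p \<Rightarrow> 'o) \<Rightarrow> ('o \<Rightarrow> 'y \<Rightarrow> real) \<Rightarrow> nat \<Rightarrow> (nat \<Rightarrow> 'x \<times> 'y) \<Rightarrow> ereal \<Rightarrow> nat
    \<Rightarrow> (nat \<Rightarrow> nat \<Rightarrow> nat) pmf" where
  "mc_pmf h L m S \<epsilon> B = Pi_pmf {..<B} (\<lambda>_. 0) (\<lambda>_. boot_pmf h L m S \<epsilon>)"

definition pl_hat :: "('x \<Rightarrow> 'p \<Rightarrow> 'o) \<Rightarrow> ('o \<Rightarrow> 'y \<Rightarrow> real) \<Rightarrow> 'p set \<Rightarrow> nat \<Rightarrow> (nat \<Rightarrow> 'x \<times> 'y) \<Rightarrow> ereal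
    \<Rightarrow> nat \<Rightarrow> (nat \<Rightarrow> nat \<Rightarrow> nat) \<Rightarrow> real" where
  "pl_hat h L A m S \<epsilon> B Js =
     (\<Sum>i<B. if erm_set h L m (S \<circ> Js i) \<epsilon> \<inter> A \<noteq> {} then 1 else 0) / real B"

definition prob_pl_hat_ge :: "('x \<times> 'y) measure \<Rightarrow> ('x \<Rightarrow> 'p \<Rightarrow> 'o) \<Rightarrow> ('o \<Rightarrow> 'y \<Rightarrow> real) \<Rightarrow> 'p set
    \<Rightarrow> nat \<Rightarrow> ereal \<Rightarrow> nat \<Rightarrow> real \<Rightarrow> real" where
  "prob_pl_hat_ge D h L A m \<epsilon> B t =
     (\<integral>S. measure_pmf.prob (mc_pmf h L m S \<epsilon> B) {Js. pl_hat h L A m S \<epsilon> B Js \<ge> t}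
        \<partial>sample_space D m)"

end

theory Submission
  imports Defs
begin


lemma choose_fact_real: "real ((2*n) choose n) = fact (2*n) / (fact n)^2"
proof -
  have "fact n * fact (2*n - n) * ((2*n) choose n) = fact (2*n)"
    by (rule binomial_fact_lemma) simp
  hence "(fact n)^2 * real ((2*n) choose n) = fact (2*n)"
    by (metis (mono_tags, opaque_lifting) diff_add_inverse mult_2 of_nat_fact of_nat_mult power2_eq_square)
  thus ?thesis by (simp add: field_simps)
qed

lemma cb_aux:
  fixes F G P x :: real
  assumes "G > 0" "P > 0" "x \<ge> 0"
  shows "((2*x+2)*(2*x+1)*F) / (((x+1)^2 * G^2) * (4*P)) = F/(G^2*P) * (2*x+1)/(2*x+2)"
proof -
  have b: "((x+1)^2 * G^2) * (4*P) \<noteq> 0" and d: "G^2*P*(2*x+2) \<noteq> 0" using assms by auto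
  have "F/(G^2*P) * (2*x+1)/(2*x+2) = (F*(2*x+1)) / (G^2*P*(2*x+2))" by simp
  also have "((2*x+2)*(2*x+1)*F) / (((x+1)^2 * G^2) * (4*P)) = \<dots>"
    by (simp add: frac_eq_eq[OF b d]) (simp add: algebra_simps power2_eq_square)
  finally show ?thesis by simp
qed

lemma central_binom_sq: "(real ((2*n) choose n) / 4^n)^2 * (2*n+1) \<le> 1"
proof -
  define c :: "nat \<Rightarrow> real" where "c n = fact (2*n) / ((fact n)^2 * 4^n)" for n
  have step: "c (Suc n) = c n * (2*n+1) / (2*n+2)" for n
  proof -
    have f1: "fact (2 * Suc n) = ((2*real n+2) * (2*real n+1)) * (fact (2*n) :: real)"
      by (simp add: algebra_simps fact_Suc)
    have f2: "(fact (Suc n) :: real)^2 = (real n+1)^2 * (fact n)^2"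
      by (simp add: fact_Suc power2_eq_square algebra_simps)
    have f3: "(4::real)^Suc n = 4 * 4^n" by simp
    show ?thesis unfolding c_def f1 f2 f3
      using cb_aux[of "fact n" "4^n" "real n" "fact (2*n)"] by (simp add: algebra_simps)
  qed
  have "(c n)^2 * (2*n+1) \<le> 1"
  proof (induction n)
    case 0 then show ?case by (simp add: c_def)
  next
    case (Suc n)
    have "(c (Suc n))^2 * (2 * Suc n + 1) = (c n)^2 * (2*n+1) * ((2*n+1)*(2*n+3)/(2*n+2)^2)"
      unfolding step by (simp add: field_simps power2_eq_square)
    also have "\<dots> \<le> 1 * 1"
    proof (rule mult_mono)
      have "(2*real n+1)*(2*n+3) \<le> (2*n+2)^2" by (simp add: power2_eq_square algebra_simps)
      moreover have "(0::real) < (2*n+2)^2" by simp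
      ultimately show "(2*n+1)*(2*n+3)/(2*n+2)^2 \<le> (1::real)"
        by (simp add: divide_le_eq_1 algebra_simps power2_eq_square)
    qed (use Suc in auto)
    finally show ?case by simp
  qed
  moreover have "real ((2*n) choose n) / 4^n = c n"
    unfolding choose_fact_real c_def by simp
  ultimately show ?thesis by simp
qed
lemma resample_binom:
  assumes n: "0 < n"
  shows "map_pmf (\<lambda>J. card {i\<in>{..<2*n}. J i < n}) (Pi_pmf {..<2*n} 0 (\<lambda>_. pmf_of_set {..<2*n}))
         = binomial_pmf (2*n) (1/2)"
proof -
  have "0 \<in> {..<2*n}" using n by simp
  hence ne: "{..<2*n} \<noteq> {}" by blast
  have c1: "card ({..<2*n} \<inter> {j. j < n}) = n"
  proof -
    have "{..<2*n} \<inter> {j. j < n} = {..<n}" by auto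
    thus ?thesis by simp
  qed
  have c2: "card ({..<2*n} \<inter> {j. \<not> j < n}) = n"
  proof -
    have "{..<2*n} \<inter> {j. \<not> j < n} = {n..<2*n}" by auto
    thus ?thesis by simp
  qed
  have bern: "map_pmf (\<lambda>j. j < n) (pmf_of_set {..<2*n}) = bernoulli_pmf (1/2)"
  proof (rule pmf_eqI)
    fix b :: bool
    have "pmf (map_pmf (\<lambda>j. j < n) (pmf_of_set {..<2*n})) b
           = measure (pmf_of_set {..<2*n}) ((\<lambda>j. j < n) -` {b})"
      by (simp add: pmf_map)
    also have "\<dots> = 1/2"
    proof (cases b)
      case True
      have "(\<lambda>j. j < n) -` {b} = {j. j < n}" using True by auto
      thus ?thesis using c1 n by (simp add: measure_pmf_of_set[OF ne] Int_commute)
    next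
      case False
      have "(\<lambda>j. j < n) -` {b} = {j. \<not> j < n}" using False by auto
      thus ?thesis using c2 n by (simp add: measure_pmf_of_set[OF ne] Int_commute)
    qed
    finally show "pmf (map_pmf (\<lambda>j. j < n) (pmf_of_set {..<2*n})) b = pmf (bernoulli_pmf (1/2)) b"
      by (cases b) simp_all
  qed
  have "Pi_pmf {..<2*n} True (\<lambda>_. map_pmf (\<lambda>j. j<n) (pmf_of_set {..<2*n}))
        = map_pmf (\<lambda>h. (\<lambda>j. j<n) \<circ> h) (Pi_pmf {..<2*n} 0 (\<lambda>_. pmf_of_set {..<2*n}))"
    by (rule Pi_pmf_map) (use n in auto)
  hence PB: "Pi_pmf {..<2*n} True (\<lambda>_. bernoulli_pmf (1/2))
        = map_pmf (\<lambda>h. (\<lambda>j. j<n) \<circ> h) (Pi_pmf {..<2*n} 0 (\<lambda>_. pmf_of_set {..<2*n}))"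
    by (simp add: bern)
  have "binomial_pmf (2*n) (1/2) = map_pmf (\<lambda>f. card {x\<in>{..<2*n}. f x}) (Pi_pmf {..<2*n} True (\<lambda>_. bernoulli_pmf (1/2)))"
    by (rule binomial_pmf_altdef') auto
  also have "\<dots> = map_pmf (\<lambda>J. card {i\<in>{..<2*n}. J i < n}) (Pi_pmf {..<2*n} 0 (\<lambda>_. pmf_of_set {..<2*n}))"
    unfolding PB map_pmf_comp by (simp add: o_def)
  finally show ?thesis by simp
qed

lemma resample_prob_half:
  assumes n: "0 < n"
  shows "measure_pmf.prob (Pi_pmf {..<2*n} 0 (\<lambda>_. pmf_of_set {..<2*n})) {J. card {i\<in>{..<2*n}. J i < n} = n}
         = real ((2*n) choose n) / 4^n"
proof -
  have "measure_pmf.prob (Pi_pmf {..<2*n} 0 (\<lambda>_. pmf_of_set {..<2*n})) {J. card {i\<in>{..<2*n}. J i < n} = n}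
      = measure_pmf.prob (map_pmf (\<lambda>J. card {i\<in>{..<2*n}. J i < n}) (Pi_pmf {..<2*n} 0 (\<lambda>_. pmf_of_set {..<2*n}))) {n}"
    by (simp add: vimage_def)
  also have "\<dots> = pmf (binomial_pmf (2*n) (1/2)) n"
    unfolding resample_binom[OF n] by (simp add: measure_pmf_single)
  also have "\<dots> = real ((2*n) choose n) * (1/2)^n * (1/2)^(2*n - n)"
    by (simp add: pmf_binomial)
  also have "\<dots> = real ((2*n) choose n) / 4^n"
    by (simp add: power_mult_distrib[symmetric] power_one_over flip: mult_2 power_add)
  finally show ?thesis .
qed

lemma sum_if_card:
  assumes "finite I"
  shows "(\<Sum>i\<in>I. if P i then x else y) = real (card {i\<in>I. P i}) * x + real (card {i\<in>I. \<not> P i}) * (y::real)"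
proof -
  have "(\<Sum>i\<in>I. if P i then x else y) = (\<Sum>i\<in>I \<inter> {i. P i}. x) + (\<Sum>i\<in>I \<inter> - {i. P i}. y)"
    by (rule sum.If_cases) (rule assms)
  also have "I \<inter> {i. P i} = {i\<in>I. P i}" by auto
  also have "I \<inter> - {i. P i} = {i\<in>I. \<not> P i}" by auto
  finally show ?thesis by simp
qed

lemma card_split: "finite I \<Longrightarrow> card {i\<in>I. P i} + card {i\<in>I. \<not> P i} = card I"
proof -
  assume f: "finite I"
  have "card ({i\<in>I. P i} \<union> {i\<in>I. \<not> P i}) = card {i\<in>I. P i} + card {i\<in>I. \<not> P i}"
    by (rule card_Un_disjoint) (use f in auto)
  moreover have "{i\<in>I. P i} \<union> {i\<in>I. \<not> P i} = I" by auto
  ultimately show ?thesis by simp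
qed

locale thm5 =
  fixes D :: "('x \<times> 'y) measure"
    and h :: "'x \<Rightarrow> 'p::topological_space \<Rightarrow> 'o"
    and L :: "'o \<Rightarrow> 'y \<Rightarrow> real"
    and A :: "'p set"
    and eps :: "nat \<Rightarrow> real \<Rightarrow> ereal"
    and \<alpha> \<gamma> :: real
  assumes D: "prob_space D"
    and A_contains: "\<exists>\<delta>>0. risk_set D h L \<delta> \<subseteq> A"
    and suc: "strong_uc D h L"
    and cases:
      "((\<exists>\<theta>0. \<forall>\<theta>. risk D h L \<theta>0 \<le> risk D h L \<theta>)
          \<and> (\<forall>m S. (\<forall>i<m. S i \<in> space D) \<longrightarrow> (\<exists>\<theta>. \<forall>\<phi>. emp_risk h L m S \<theta> \<le> emp_risk h L m S \<phi>))
          \<and> eps = eps_a D h L)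
       \<or> eps = eps_b D h L"
    and meas_uc: "\<And>m \<epsilon>. {S \<in> space (sample_space D m).
                     \<forall>\<theta>. \<bar>risk D h L \<theta> - emp_risk h L m S \<theta>\<bar> \<le> \<epsilon>} \<in> sets (sample_space D m)"
    and meas_ne: "\<And>m \<epsilon> J. {S \<in> space (sample_space D m). erm_set h L m (S \<circ> J) \<epsilon> \<noteq> {}}
                     \<in> sets (sample_space D m)"
    and meas_A: "\<And>m \<epsilon> J. {S \<in> space (sample_space D m). erm_set h L m (S \<circ> J) \<epsilon> \<inter> A \<noteq> {}}
                     \<in> sets (sample_space D m)"
    and well_defined: "\<And>m S \<beta>. S \<in> space (sample_space D m) \<Longrightarrow> \<beta> \<in> {\<alpha>, \<alpha> - \<gamma>} \<Longrightarrow>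
                     set_pmf (resample_pmf m) \<inter> boot_event h L m S (eps m \<beta>) \<noteq> {}"
begin

lemma space_ss: "space (sample_space D m) = PiE {..<m} (\<lambda>_. space D)"
  by (simp add: sample_space_def space_PiM)

lemma prob_ss: "prob_space (sample_space D m)"
  unfolding sample_space_def by (rule prob_space_PiM) (use D in auto)

lemma set_resample: "J \<in> set_pmf (resample_pmf m) \<Longrightarrow> i < m \<Longrightarrow> J i < m"
proof -
  assume J: "J \<in> set_pmf (resample_pmf m)" and i: "i < m"
  have ne: "{..<m} \<noteq> {}" using i by auto
  show ?thesis using J i unfolding resample_pmf_def
    by (subst (asm) set_Pi_pmf) (auto simp: PiE_dflt_def set_pmf_of_set[OF ne])
qed

lemma comp_space: "S \<in> space (sample_space D m) \<Longrightarrow> J \<in> set_pmf (resample_pmf m) \<Longrightarrow> i < m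
   \<Longrightarrow> (S \<circ> J) i \<in> space D"
  using set_resample[of J m i] by (auto simp: space_ss)

lemma emp_risk_const: "0 < m \<Longrightarrow> (\<forall>i<m. S i = z) \<Longrightarrow> emp_risk h L m S \<theta> = loss h L \<theta> z"
  unfolding emp_risk_def by simp

lemma const_space: "z \<in> space D \<Longrightarrow> restrict (\<lambda>_. z) {..<m} \<in> space (sample_space D m)"
  by (auto simp: space_ss)

lemma eps_nonneg: "eps m \<beta> \<ge> 0"
  using cases unfolding eps_a_def eps_b_def
  by (auto intro!: Inf_greatest)

definition guar :: "nat \<Rightarrow> real \<Rightarrow> real \<Rightarrow> bool" where
  "guar m \<eta> \<beta> \<longleftrightarrow>
     measure (sample_space D m)
         {S \<in> space (sample_space D m). \<forall>\<theta>. \<bar>risk D h L \<theta> - emp_risk h L m S \<theta>\<bar> \<le> \<eta>} \<ge> 1 - \<beta>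
     \<and> (\<forall>S \<in> space (sample_space D m).
          measure_pmf.prob (resample_pmf m)
            {J. \<forall>\<theta>. \<bar>emp_risk h L m S \<theta> - emp_risk h L m (S \<circ> J) \<theta>\<bar> \<le> \<eta>} \<ge> 1 - \<beta>)"

lemma witness_guar:
  assumes "suc_witness D h L w" "0 < \<eta>" "0 < \<beta>" "0 < m" "w \<eta> \<beta> \<le> real m"
  shows "guar m \<eta> \<beta>"
  using assms unfolding suc_witness_def guar_def by blast

lemma guar_mono:
  assumes g: "guar m \<eta> \<beta>" and le: "\<eta> \<le> \<eta>'"
  shows "guar m \<eta>' \<beta>"
proof -
  interpret P: prob_space "sample_space D m" by (rule prob_ss)
  have 1: "measure (sample_space D m)
         {S \<in> space (sample_space D m). \<forall>\<theta>. \<bar>risk D h L \<theta> - emp_risk h L m S \<theta>\<bar> \<le> \<eta>}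
        \<le> measure (sample_space D m)
         {S \<in> space (sample_space D m). \<forall>\<theta>. \<bar>risk D h L \<theta> - emp_risk h L m S \<theta>\<bar> \<le> \<eta>'}"
    by (rule P.finite_measure_mono) (use le meas_uc in \<open>auto intro: order_trans\<close>)
  have 2: "measure_pmf.prob (resample_pmf m)
            {J. \<forall>\<theta>. \<bar>emp_risk h L m S \<theta> - emp_risk h L m (S \<circ> J) \<theta>\<bar> \<le> \<eta>}
       \<le> measure_pmf.prob (resample_pmf m)
            {J. \<forall>\<theta>. \<bar>emp_risk h L m S \<theta> - emp_risk h L m (S \<circ> J) \<theta>\<bar> \<le> \<eta>'}" for S
    by (rule measure_pmf.finite_measure_mono) (use le in \<open>auto intro: order_trans\<close>)
  show ?thesis using g 1 2 unfolding guar_def by (meson order_trans)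
qed

lemma suc_fun_guar:
  assumes "suc_fun D h L \<eta> \<beta> < ereal (real m + 1)" "0 < \<eta>" "0 < \<beta>" "0 < m"
  shows "guar m \<eta> \<beta>"
proof -
  from assms(1) obtain w where w: "suc_witness D h L w"
    and lt: "ereal (real_of_int \<lceil>w \<eta> \<beta>\<rceil>) < ereal (real m + 1)"
    unfolding suc_fun_def by (auto simp: INF_less_iff)
  have "w \<eta> \<beta> \<le> real m"
  proof -
    from lt have "\<lceil>w \<eta> \<beta>\<rceil> < int m + 1" by simp
    hence "\<lceil>w \<eta> \<beta>\<rceil> \<le> int m" by linarith
    thus ?thesis by linarith
  qed
  thus ?thesis using witness_guar[OF w] assms by blast
qed

lemma eps_guar:
  assumes lt: "eps m \<beta> < ereal e" and b: "0 < \<beta>" and m: "0 < m"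
  shows "guar m (e/2) \<beta>"
  using cases
proof
  assume "(\<exists>\<theta>0. \<forall>\<theta>. risk D h L \<theta>0 \<le> risk D h L \<theta>)
          \<and> (\<forall>m S. (\<forall>i<m. S i \<in> space D) \<longrightarrow> (\<exists>\<theta>. \<forall>\<phi>. emp_risk h L m S \<theta> \<le> emp_risk h L m S \<phi>))
          \<and> eps = eps_a D h L"
  hence ea: "eps = eps_a D h L" by blast
  from lt obtain x where x: "0 < x" "ereal (real m) \<ge> suc_fun D h L (x / 2) \<beta>" "x < e"
    unfolding ea eps_a_def by (auto simp: Inf_less_iff)
  have "suc_fun D h L (x / 2) \<beta> < ereal (real m + 1)"
    using x(2) by (rule le_less_trans) simp
  hence "guar m (x/2) \<beta>" using suc_fun_guar x b m by simp
  thus ?thesis by (rule guar_mono) (use x in simp)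
next
  assume eb: "eps = eps_b D h L"
  from lt obtain x where x: "0 < x"
      "ereal (real m) \<ge> (INF \<delta>' \<in> {0<..<x}. suc_fun D h L ((x - \<delta>') / 2) \<beta>)" "x < e"
    unfolding eb eps_b_def by (auto simp: Inf_less_iff)
  have "(INF \<delta>' \<in> {0<..<x}. suc_fun D h L ((x - \<delta>') / 2) \<beta>) < ereal (real m + 1)"
    using x(2) by (rule le_less_trans) simp
  then obtain d where d: "0 < d" "d < x" "suc_fun D h L ((x - d) / 2) \<beta> < ereal (real m + 1)"
    by (auto simp: INF_less_iff)
  hence "guar m ((x - d)/2) \<beta>" using suc_fun_guar b m by simp
  thus ?thesis by (rule guar_mono) (use x d in simp)
qed

lemma eps_eventually:
  assumes b: "0 < \<beta>" and e: "0 < e"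
  shows "\<exists>M. \<forall>m\<ge>M. eps m \<beta> < ereal e"
proof -
  from suc obtain w where w: "suc_witness D h L w" unfolding strong_uc_def by blast
  have sf: "suc_fun D h L \<eta> \<beta> \<le> ereal (real_of_int \<lceil>w \<eta> \<beta>\<rceil>)" for \<eta>
    unfolding suc_fun_def using w by (auto intro!: INF_lower2)
  define M where "M = nat \<lceil>w (e/4) \<beta>\<rceil> + nat \<lceil>w (e/8) \<beta>\<rceil>"
  have M1: "real_of_int \<lceil>w (e/4) \<beta>\<rceil> \<le> real m" if "m \<ge> M" for m
    using that unfolding M_def by linarith
  have M2: "real_of_int \<lceil>w (e/8) \<beta>\<rceil> \<le> real m" if "m \<ge> M" for m
    using that unfolding M_def by linarith
  show ?thesis
  proof (intro exI allI impI)
    fix m assume m: "M \<le> m"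
    show "eps m \<beta> < ereal e"
      using cases
    proof
      assume "(\<exists>\<theta>0. \<forall>\<theta>. risk D h L \<theta>0 \<le> risk D h L \<theta>)
          \<and> (\<forall>m S. (\<forall>i<m. S i \<in> space D) \<longrightarrow> (\<exists>\<theta>. \<forall>\<phi>. emp_risk h L m S \<theta> \<le> emp_risk h L m S \<phi>))
          \<and> eps = eps_a D h L"
      hence ea: "eps = eps_a D h L" by blast
      have "suc_fun D h L ((e/2) / 2) \<beta> \<le> ereal (real m)"
        using sf[of "e/4"] M1[OF m] by (simp add: order_trans)
      hence "eps m \<beta> \<le> ereal (e/2)"
        unfolding ea eps_a_def using e by (intro Inf_lower) auto
      thus ?thesis using e by (simp add: le_less_trans)
    next
      assume eb: "eps = eps_b D h L"
      have "(INF \<delta>' \<in> {0<..<e/2}. suc_fun D h L ((e/2 - \<delta>') / 2) \<beta>) \<le> suc_fun D h L ((e/2 - e/4) / 2) \<beta>"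
        using e by (intro INF_lower) auto
      also have "(e/2 - e/4) / 2 = e/8" by simp
      also have "suc_fun D h L (e/8) \<beta> \<le> ereal (real m)"
        using sf[of "e/8"] M2[OF m] by (simp add: order_trans)
      finally have "eps m \<beta> \<le> ereal (e/2)"
        unfolding eb eps_b_def using e by (intro Inf_lower) auto
      thus ?thesis using e by (simp add: le_less_trans)
    qed
  qed
qed

lemma const_erm:
  assumes m: "0 < m" and b: "\<beta> \<in> {\<alpha>, \<alpha> - \<gamma>}" and z: "z \<in> space D"
  shows "\<exists>\<theta>. ereal (loss h L \<theta> z) \<le> (INF \<phi>. ereal (loss h L \<phi> z)) + eps m \<beta>"
proof -
  define S where "S = restrict (\<lambda>_. z) {..<m}"
  have S: "S \<in> space (sample_space D m)" unfolding S_def by (rule const_space[OF z])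
  from well_defined[OF S b] obtain J where J: "J \<in> set_pmf (resample_pmf m)"
    and ne: "erm_set h L m (S \<circ> J) (eps m \<beta>) \<noteq> {}"
    unfolding boot_event_def by blast
  have eq: "emp_risk h L m (S \<circ> J) \<theta> = loss h L \<theta> z" for \<theta>
    by (rule emp_risk_const[OF m]) (use set_resample[OF J] in \<open>auto simp: S_def\<close>)
  from ne show ?thesis unfolding erm_set_def eq by blast
qed

lemma loss_bdd_below:
  assumes m: "0 < m" and b: "\<beta> \<in> {\<alpha>, \<alpha> - \<gamma>}" and z: "z \<in> space D"
    and fin: "eps m \<beta> < \<infinity>"
  shows "\<exists>c. \<forall>\<theta>. c \<le> loss h L \<theta> z"
proof (rule ccontr)
  assume nb: "\<not> (\<exists>c. \<forall>\<theta>. c \<le> loss h L \<theta> z)"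
  have "(INF \<phi>. ereal (loss h L \<phi> z)) = -\<infinity>"
  proof (rule ereal_bot)
    fix B :: real
    from nb obtain \<theta> where "loss h L \<theta> z < B" by (meson not_le less_imp_le)
    thus "(INF \<phi>. ereal (loss h L \<phi> z)) \<le> ereal B"
      by (intro INF_lower2[of \<theta>]) auto
  qed
  moreover obtain \<theta> where "ereal (loss h L \<theta> z) \<le> (INF \<phi>. ereal (loss h L \<phi> z)) + eps m \<beta>"
    using const_erm[OF m b z] by blast
  moreover have "eps m \<beta> \<noteq> \<infinity>" using fin by simp
  ultimately show False
    using eps_nonneg[of m \<beta>] by (cases "eps m \<beta>") auto
qed

lemma const_argmin:
  assumes m: "0 < m" and b: "\<beta> \<in> {\<alpha>, \<alpha> - \<gamma>}" and z: "z \<in> space D"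
    and e0: "eps m \<beta> = 0"
  shows "\<exists>\<theta>. \<forall>\<phi>. loss h L \<theta> z \<le> loss h L \<phi> z"
proof -
  obtain \<theta> where "ereal (loss h L \<theta> z) \<le> (INF \<phi>. ereal (loss h L \<phi> z))"
    using const_erm[OF m b z] e0 by auto
  hence "ereal (loss h L \<theta> z) \<le> ereal (loss h L \<phi> z)" for \<phi>
    by (rule order_trans) (rule INF_lower, simp)
  hence "loss h L \<theta> z \<le> loss h L \<phi> z" for \<phi> by simp
  thus ?thesis by blast
qed

lemma loss_const:
  assumes b: "\<beta> \<in> {\<alpha>, \<alpha> - \<gamma>}" "0 < \<beta>" "\<beta> < 1"
    and z: "\<forall>m\<ge>m0. eps m \<beta> = 0"
    and a: "a \<in> space D" "a' \<in> space D"
  shows "loss h L \<theta> a = loss h L \<theta> a'"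
proof (rule ccontr)
  assume ne: "loss h L \<theta> a \<noteq> loss h L \<theta> a'"
  define d where "d = loss h L \<theta> a - loss h L \<theta> a'"
  have d: "\<bar>d\<bar> > 0" using ne unfolding d_def by simp
  define n where "n = m0 + nat \<lceil>1/(1-\<beta>)^2\<rceil> + 1"
  have n0: "0 < n" "m0 \<le> 2*n" unfolding n_def by auto
  have q: "0 < (1-\<beta>)^2" using b by simp
  have "1/(1-\<beta>)^2 \<le> real (nat \<lceil>1/(1-\<beta>)^2\<rceil>)" by (rule real_nat_ceiling_ge)
  moreover have "real n = real m0 + real (nat \<lceil>1/(1-\<beta>)^2\<rceil>) + 1"
    unfolding n_def by (simp only: of_nat_add of_nat_1)
  ultimately have "1/(1-\<beta>)^2 < 2*real n + 1" by linarith
  hence nb: "1/(2*real n+1) < (1-\<beta>)^2"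
    using q by (simp add: field_simps)
  define m where "m = 2*n"
  have m0': "0 < m" using n0 unfolding m_def by simp
  define e where "e = \<bar>d\<bar> / (2*n)"
  have e: "0 < e" using d n0 unfolding e_def by simp
  have "eps m \<beta> = 0" using z n0 unfolding m_def by simp
  hence "eps m \<beta> < ereal e" using e by simp
  hence g: "guar m (e/2) \<beta>" using eps_guar b(2) m0' by blast
  define S where "S = restrict (\<lambda>i. if i < n then a else a') {..<m}"
  have S: "S \<in> space (sample_space D m)" unfolding S_def space_ss using a by auto
  let ?V = "{J. \<forall>\<theta>. \<bar>emp_risk h L m S \<theta> - emp_risk h L m (S \<circ> J) \<theta>\<bar> \<le> e/2}"
  have pV: "measure_pmf.prob (resample_pmf m) ?V \<ge> 1 - \<beta>" using g S unfolding guar_def by blast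
  have sub: "?V \<inter> set_pmf (resample_pmf m) \<subseteq> {J. card {i\<in>{..<2*n}. J i < n} = n}"
  proof (intro subsetI CollectI)
    fix J assume VJ: "J \<in> ?V \<inter> set_pmf (resample_pmf m)"
    hence V: "J \<in> ?V" and J: "J \<in> set_pmf (resample_pmf m)" by auto
    define K where "K = card {i\<in>{..<2*n}. J i < n}"
    define K' where "K' = card {i\<in>{..<2*n}. \<not> J i < n}"
    have KK: "K + K' = 2*n" unfolding K_def K'_def using card_split[of "{..<2*n}"] by simp
    have s1: "(\<Sum>i<m. loss h L \<theta> (S i)) = real n * loss h L \<theta> a + real n * loss h L \<theta> a'"
    proof -
      have "(\<Sum>i<m. loss h L \<theta> (S i)) = (\<Sum>i<2*n. if i < n then loss h L \<theta> a else loss h L \<theta> a')"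
        unfolding S_def m_def by (intro sum.cong) auto
      also have "\<dots> = real (card {i\<in>{..<2*n}. i < n}) * loss h L \<theta> a + real (card {i\<in>{..<2*n}. \<not> i < n}) * loss h L \<theta> a'"
        by (rule sum_if_card) simp
      also have "{i\<in>{..<2*n}. i < n} = {..<n}" by auto
      also have "{i\<in>{..<2*n}. \<not> i < n} = {n..<2*n}" by auto
      finally show ?thesis by simp
    qed
    have s2: "(\<Sum>i<m. loss h L \<theta> ((S \<circ> J) i)) = real K * loss h L \<theta> a + real K' * loss h L \<theta> a'"
    proof -
      have "(\<Sum>i<m. loss h L \<theta> ((S \<circ> J) i)) = (\<Sum>i<2*n. if J i < n then loss h L \<theta> a else loss h L \<theta> a')"
        unfolding m_def by (intro sum.cong) (use set_resample[OF J] in \<open>auto simp: S_def m_def\<close>)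
      also have "\<dots> = real K * loss h L \<theta> a + real K' * loss h L \<theta> a'"
        unfolding K_def K'_def by (rule sum_if_card) simp
      finally show ?thesis .
    qed
    have "\<bar>emp_risk h L m S \<theta> - emp_risk h L m (S \<circ> J) \<theta>\<bar> \<le> e/2" using V by blast
    hence "\<bar>(real n * loss h L \<theta> a + real n * loss h L \<theta> a') - (real K * loss h L \<theta> a + real K' * loss h L \<theta> a')\<bar> / real m \<le> e/2"
      unfolding emp_risk_def s1 s2 by (simp add: diff_divide_distrib[symmetric])
    moreover have "real K' = 2 * real n - real K" using KK by linarith
    ultimately have "\<bar>(real n - real K) * d\<bar> / (2 * real n) \<le> \<bar>d\<bar> / (4 * real n)"
      unfolding d_def e_def m_def by (simp add: algebra_simps)
    hence "\<bar>(real n - real K) * d\<bar> \<le> \<bar>d\<bar> / 2"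
      using n0 by (simp add: divide_le_eq le_divide_eq)
    hence "\<bar>real n - real K\<bar> * \<bar>d\<bar> \<le> \<bar>d\<bar> / 2"
      by (simp only: abs_mult)
    hence "\<bar>real n - real K\<bar> \<le> 1/2" using d by (simp add: field_simps)
    hence "K = n" by linarith
    thus "card {i\<in>{..<2*n}. J i < n} = n" unfolding K_def .
  qed
  have "measure_pmf.prob (resample_pmf m) ?V = measure_pmf.prob (resample_pmf m) (?V \<inter> set_pmf (resample_pmf m))"
    by (simp add: measure_Int_set_pmf)
  also have "\<dots> \<le> measure_pmf.prob (resample_pmf m) {J. card {i\<in>{..<2*n}. J i < n} = n}"
    by (rule measure_pmf.finite_measure_mono[OF sub]) simp
  also have "\<dots> = real ((2*n) choose n) / 4^n"
    unfolding resample_pmf_def m_def by (rule resample_prob_half[OF n0(1)])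
  finally have le: "1 - \<beta> \<le> real ((2*n) choose n) / 4^n" using pV by simp
  have "(real ((2*n) choose n) / 4^n)^2 * (2*n+1) \<le> 1" by (rule central_binom_sq)
  hence "(real ((2*n) choose n) / 4^n)^2 \<le> 1/(2*real n+1)" by (simp add: field_simps)
  hence "(real ((2*n) choose n) / 4^n)^2 < (1-\<beta>)^2" using nb by simp
  moreover have "(1-\<beta>)^2 \<le> (real ((2*n) choose n) / 4^n)^2"
    using le b by (intro power_mono) auto
  ultimately show False by simp
qed

end


lemma measure_cond_pmf:
  assumes "set_pmf p \<inter> s \<noteq> {}"
  shows "measure_pmf.prob (cond_pmf p s) B = measure_pmf.prob p (s \<inter> B) / measure_pmf.prob p s"
  using emeasure_measure_pmf_not_zero[OF assms]
  by (simp add: cond_pmf.rep_eq[OF assms] measure_pmf.emeasure_eq_measure)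

lemma bool_pmf_bern: "map_pmf P Q = bernoulli_pmf (measure_pmf.prob Q {J. P J})"
proof (rule pmf_eqI)
  fix b :: bool
  define q where "q = measure_pmf.prob Q {J. P J}"
  have q01: "0 \<le> q" "q \<le> 1" unfolding q_def by simp_all
  have v1: "P -` {True} = {J. P J}" by auto
  have v2: "P -` {False} = - {J. P J}" by auto
  have c: "measure_pmf.prob Q (- {J. P J}) = 1 - q"
    using measure_pmf.prob_compl[of "{J. P J}" Q] unfolding q_def by (simp add: Compl_eq_Diff_UNIV)
  have t: "pmf (map_pmf P Q) True = q" by (subst pmf_map, subst v1) (simp add: q_def)
  have f: "pmf (map_pmf P Q) False = 1 - q" by (subst pmf_map, subst v2) (rule c)
  show "pmf (map_pmf P Q) b = pmf (bernoulli_pmf (measure_pmf.prob Q {J. P J})) b"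
    using t f q01 unfolding q_def[symmetric] by (cases b) simp_all
qed
lemma mc_bound:
  fixes Q :: "'a pmf" and P :: "'a \<Rightarrow> bool"
  assumes B: "0 < B" and hq: "measure_pmf.prob Q {J. P J} \<ge> t + \<gamma>" and \<gamma>: "0 \<le> \<gamma>"
  shows "measure_pmf.prob (Pi_pmf {..<B} d (\<lambda>_. Q))
           {Js. (\<Sum>i<B. if P (Js i) then 1 else 0) / real B \<ge> t} \<ge> 1 - exp (-2 * B * \<gamma>^2)"
proof -
  define q where "q = measure_pmf.prob Q {J. P J}"
  have q01: "q \<in> {0..1}" unfolding q_def by simp
  have PM: "Pi_pmf {..<B} (P d) (\<lambda>_. bernoulli_pmf q) = map_pmf (\<lambda>h. P \<circ> h) (Pi_pmf {..<B} d (\<lambda>_. Q))"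
    unfolding q_def bool_pmf_bern[symmetric] by (rule Pi_pmf_map) auto
  have bin: "binomial_pmf B q = map_pmf (\<lambda>c. card {x\<in>{..<B}. c x}) (Pi_pmf {..<B} (P d) (\<lambda>_. bernoulli_pmf q))"
    by (rule binomial_pmf_altdef') (use q01 in auto)
  have cnt: "(\<Sum>i<B. if c i then 1 else 0) = real (card {x\<in>{..<B}. c x})" for c :: "nat \<Rightarrow> bool"
  proof -
    have "(\<Sum>i<B. if c i then 1 else (0::real)) = (\<Sum>i\<in>{x\<in>{..<B}. c x}. 1)"
      by (intro sum.mono_neutral_cong_right) auto
    thus ?thesis by simp
  qed
  have e1: "measure_pmf.prob (Pi_pmf {..<B} d (\<lambda>_. Q))
           {Js. (\<Sum>i<B. if P (Js i) then 1 else 0) / real B \<ge> t}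
      = measure_pmf.prob (binomial_pmf B q) {k. real k / real B \<ge> t}"
    unfolding bin PM by (simp add: vimage_def cnt)
  have e2: "measure_pmf.prob (binomial_pmf B q) {k. real k / real B \<ge> t}
       = 1 - measure_pmf.prob (binomial_pmf B q) {k. real k / real B < t}"
  proof -
    have "UNIV - {k. real k / real B < t} = {k. real k / real B \<ge> t}" by auto
    thus ?thesis using measure_pmf.prob_compl[of "{k. real k / real B < t}" "binomial_pmf B q"] by simp
  qed
  have e3: "measure_pmf.prob (binomial_pmf B q) {k. real k / real B < t}
      \<le> measure_pmf.prob (binomial_pmf B q) {k. real k / real B \<le> q - \<gamma>}"
    by (rule measure_pmf.finite_measure_mono) (use hq in \<open>auto simp: q_def\<close>)
  have e4: "measure_pmf.prob (binomial_pmf B q) {k. real k / real B \<le> q - \<gamma>} \<le> exp (real_of_int (- 2 * int B) * \<gamma>^2)"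
    by (rule binomial_distribution.prob_le') (use q01 B \<gamma> in \<open>auto simp: binomial_distribution_def\<close>)
  have e5: "real_of_int (- 2 * int B) = -2 * real B" by simp
  show ?thesis using e1 e2 e3 e4 unfolding e5 by linarith
qed

context thm5 begin

lemma eps_b_mono:
  assumes "m \<le> m'"
  shows "eps_b D h L m' \<beta> \<le> eps_b D h L m \<beta>"
  unfolding eps_b_def
  by (rule Inf_superset_mono, rule image_mono) (use assms in \<open>auto intro: order_trans\<close>)

lemma eps_zero_from:
  assumes "eps = eps_b D h L" "eps m \<beta> = 0"
  shows "\<forall>m'\<ge>m. eps m' \<beta> = 0"
  using eps_b_mono[of m _ \<beta>] eps_nonneg assms by (metis order_antisym)

lemma pl_good:
  assumes b: "\<beta> \<in> {\<alpha>, \<alpha> - \<gamma>}" "0 < \<beta>" "\<beta> < 1" and m: "0 < m"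
    and \<delta>: "0 < \<delta>" "risk_set D h L \<delta> \<subseteq> A"
    and le: "eps m \<beta> < ereal (\<delta>/3)"
    and S: "S \<in> space (sample_space D m)"
    and U: "\<forall>\<theta>. \<bar>risk D h L \<theta> - emp_risk h L m S \<theta>\<bar> \<le> \<delta>/6"
  shows "pl_boot h L A m S (eps m \<beta>) \<ge> 1 - \<beta>"
proof -
  have g: "guar m (\<delta>/6) \<beta>" using eps_guar[OF le b(2) m] by simp
  let ?V = "{J. \<forall>\<theta>. \<bar>emp_risk h L m S \<theta> - emp_risk h L m (S \<circ> J) \<theta>\<bar> \<le> \<delta>/6}"
  have pV: "measure_pmf.prob (resample_pmf m) ?V \<ge> 1 - \<beta>" using g S unfolding guar_def by blast
  obtain \<epsilon>0 where e0: "eps m \<beta> = ereal \<epsilon>0" "0 \<le> \<epsilon>0" "\<epsilon>0 < \<delta>/3"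
    using eps_nonneg[of m \<beta>] le by (cases "eps m \<beta>") auto
  have key: "erm_set h L m (S \<circ> J) (eps m \<beta>) \<inter> A \<noteq> {}"
    if JV: "J \<in> ?V" and J: "J \<in> set_pmf (resample_pmf m)" for J
  proof -
    define F where "F = emp_risk h L m (S \<circ> J)"
    have sp: "\<forall>i<m. (S \<circ> J) i \<in> space D" using comp_space[OF S J] by blast
    have exmin: "\<exists>\<theta>. ereal (F \<theta>) \<le> (INF \<phi>. ereal (F \<phi>)) + ereal \<epsilon>0"
    proof -
      have from_min: ?thesis if "\<exists>\<theta>. \<forall>\<phi>. F \<theta> \<le> F \<phi>"
      proof -
        from that obtain \<theta> where th: "\<forall>\<phi>. F \<theta> \<le> F \<phi>" by blast
        have "ereal (F \<theta>) \<le> (INF \<phi>. ereal (F \<phi>))" using th by (auto intro!: INF_greatest)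
        also have "\<dots> \<le> (INF \<phi>. ereal (F \<phi>)) + ereal \<epsilon>0" using e0(2)
          by (simp add: ereal_le_add_self)
        finally show ?thesis by blast
      qed
      show ?thesis using cases
      proof
        assume "(\<exists>\<theta>0. \<forall>\<theta>. risk D h L \<theta>0 \<le> risk D h L \<theta>)
          \<and> (\<forall>m S. (\<forall>i<m. S i \<in> space D) \<longrightarrow> (\<exists>\<theta>. \<forall>\<phi>. emp_risk h L m S \<theta> \<le> emp_risk h L m S \<phi>))
          \<and> eps = eps_a D h L"
        hence "\<exists>\<theta>. \<forall>\<phi>. F \<theta> \<le> F \<phi>" using sp unfolding F_def by blast
        thus ?thesis by (rule from_min)
      next
        assume eb: "eps = eps_b D h L"
        show ?thesis
        proof (cases "\<epsilon>0 = 0")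
          case True
          hence ez: "eps m \<beta> = 0" using e0 by (simp add: zero_ereal_def)
          have allm: "\<forall>m'\<ge>m. eps m' \<beta> = 0" by (rule eps_zero_from[OF eb ez])
          define z0 where "z0 = (S \<circ> J) 0"
          have z0: "z0 \<in> space D" using sp m unfolding z0_def by blast
          have Feq: "F \<theta> = loss h L \<theta> z0" for \<theta>
          proof -
            have "(\<Sum>i<m. loss h L \<theta> ((S \<circ> J) i)) = (\<Sum>i<m. loss h L \<theta> z0)"
              by (intro sum.cong refl loss_const[OF b allm]) (use sp z0 in auto)
            thus ?thesis unfolding F_def emp_risk_def using m by simp
          qed
          obtain \<theta> where "\<forall>\<phi>. loss h L \<theta> z0 \<le> loss h L \<phi> z0"
            using const_argmin[OF m b(1) z0 ez] by blast
          hence "\<exists>\<theta>. \<forall>\<phi>. F \<theta> \<le> F \<phi>" unfolding Feq by blast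
          thus ?thesis by (rule from_min)
        next
          case False
          hence pos: "0 < \<epsilon>0" using e0 by simp
          have "\<forall>i<m. \<exists>c. \<forall>\<theta>. c \<le> loss h L \<theta> ((S \<circ> J) i)"
            using loss_bdd_below[OF m b(1)] sp e0(1) by auto
          then obtain c where c: "\<forall>i<m. \<forall>\<theta>. c i \<le> loss h L \<theta> ((S \<circ> J) i)" by metis
          define C where "C = (\<Sum>i<m. c i) / real m"
          have FC: "C \<le> F \<phi>" for \<phi>
            unfolding C_def F_def emp_risk_def using m c
            by (intro divide_right_mono sum_mono) auto
          define I where "I = (INF \<phi>. ereal (F \<phi>))"
          have "ereal C \<le> I" unfolding I_def using FC by (auto intro!: INF_greatest)
          moreover have "I \<le> ereal (F undefined)" unfolding I_def by (rule INF_lower) simp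
          ultimately obtain r where r: "I = ereal r" by (cases I) auto
          have "I < I + ereal \<epsilon>0" using r pos by simp
          then obtain \<theta> where "ereal (F \<theta>) < I + ereal \<epsilon>0"
            unfolding I_def by (subst (asm) INF_less_iff) blast
          thus ?thesis unfolding I_def by (blast intro: less_imp_le)
        qed
      qed
    qed
    then obtain \<theta> where th: "ereal (F \<theta>) \<le> (INF \<phi>. ereal (F \<phi>)) + ereal \<epsilon>0" by blast
    have Fle: "F \<theta> \<le> F \<phi> + \<epsilon>0" for \<phi>
    proof -
      have "ereal (F \<theta>) \<le> ereal (F \<phi>) + ereal \<epsilon>0"
        using th by (rule order_trans) (intro add_right_mono INF_lower, simp)
      thus ?thesis by simp
    qed
    have VJ: "\<bar>emp_risk h L m S \<psi> - F \<psi>\<bar> \<le> \<delta>/6" for \<psi> using JV unfolding F_def by blast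
    have Rle: "risk D h L \<theta> - \<delta> \<le> risk D h L \<phi>" for \<phi>
      using U[rule_format, of \<theta>] U[rule_format, of \<phi>] VJ[of \<theta>] VJ[of \<phi>] Fle[of \<phi>] e0(3)
      unfolding abs_le_iff by linarith
    have "ereal (risk D h L \<theta> - \<delta>) \<le> (INF \<phi>. ereal (risk D h L \<phi>))"
      using Rle by (auto intro!: INF_greatest)
    moreover have "(INF \<phi>. ereal (risk D h L \<phi>)) \<le> ereal (risk D h L undefined)"
      by (rule INF_lower) simp
    ultimately obtain r where r: "(INF \<phi>. ereal (risk D h L \<phi>)) = ereal r" "risk D h L \<theta> - \<delta> \<le> r"
      by (cases "INF \<phi>. ereal (risk D h L \<phi>)") auto
    have "\<theta> \<in> risk_set D h L \<delta>" unfolding risk_set_def using r by simp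
    moreover have "\<theta> \<in> erm_set h L m (S \<circ> J) (eps m \<beta>)"
      unfolding erm_set_def e0(1) using th unfolding F_def by simp
    ultimately show ?thesis using \<delta>(2) by blast
  qed
  define X where "X = boot_event h L m S (eps m \<beta>)"
  define Y where "Y = {J. erm_set h L m (S \<circ> J) (eps m \<beta>) \<inter> A \<noteq> {}}"
  have wd: "set_pmf (resample_pmf m) \<inter> X \<noteq> {}" unfolding X_def by (rule well_defined[OF S b(1)])
  have sub: "?V \<inter> set_pmf (resample_pmf m) \<subseteq> X \<inter> Y"
    using key unfolding X_def Y_def boot_event_def by blast
  have "1 - \<beta> \<le> measure_pmf.prob (resample_pmf m) ?V" by (rule pV)
  also have "\<dots> = measure_pmf.prob (resample_pmf m) (?V \<inter> set_pmf (resample_pmf m))"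
    by (simp add: measure_Int_set_pmf)
  also have "\<dots> \<le> measure_pmf.prob (resample_pmf m) (X \<inter> Y)"
    by (rule measure_pmf.finite_measure_mono[OF sub]) simp
  also have "\<dots> \<le> measure_pmf.prob (resample_pmf m) (X \<inter> Y) / measure_pmf.prob (resample_pmf m) X"
  proof -
    have px: "0 < measure_pmf.prob (resample_pmf m) X" using wd by (auto intro: measure_pmf_posI)
    have "measure_pmf.prob (resample_pmf m) X \<le> 1" by simp
    thus ?thesis using px by (simp add: le_divide_eq mult_left_le)
  qed
  also have "\<dots> = pl_boot h L A m S (eps m \<beta>)"
    unfolding pl_boot_def boot_pmf_def X_def[symmetric] Y_def[symmetric]
    by (rule measure_cond_pmf[symmetric, OF wd])
  finally show ?thesis .
qed

end


context thm5 begin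

lemma finite_resample: "finite (set_pmf (resample_pmf m))"
proof -
  have fin: "finite (set_pmf (pmf_of_set {..<m}))" if "x < m" for x :: nat
  proof -
    have ne: "{..<m} \<noteq> {}" using that by blast
    show ?thesis by (simp add: set_pmf_of_set[OF ne])
  qed
  show ?thesis unfolding resample_pmf_def
    by (subst set_Pi_pmf) (auto intro!: finite_PiE_dflt fin)
qed

lemma integrand_invariant:
  assumes b: "\<beta> \<in> {\<alpha>, \<alpha> - \<gamma>}" and S: "S \<in> space (sample_space D m)" and S': "S' \<in> space (sample_space D m)"
    and eq: "\<forall>J\<in>set_pmf (resample_pmf m).
       (erm_set h L m (S \<circ> J) (eps m \<beta>) \<noteq> {}) = (erm_set h L m (S' \<circ> J) (eps m \<beta>) \<noteq> {}) \<and>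
       (erm_set h L m (S \<circ> J) (eps m \<beta>) \<inter> A \<noteq> {}) = (erm_set h L m (S' \<circ> J) (eps m \<beta>) \<inter> A \<noteq> {})"
  shows "measure_pmf.prob (mc_pmf h L m S (eps m \<beta>) B) {Js. pl_hat h L A m S (eps m \<beta>) B Js \<ge> t}
       = measure_pmf.prob (mc_pmf h L m S' (eps m \<beta>) B) {Js. pl_hat h L A m S' (eps m \<beta>) B Js \<ge> t}"
proof -
  let ?p = "resample_pmf m"
  let ?F = "set_pmf ?p"
  define X where "X = boot_event h L m S (eps m \<beta>)"
  define X' where "X' = boot_event h L m S' (eps m \<beta>)"
  have wd: "?F \<inter> X \<noteq> {}" unfolding X_def by (rule well_defined[OF S b])
  have wd': "?F \<inter> X' \<noteq> {}" unfolding X'_def by (rule well_defined[OF S' b])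
  have XX: "X \<inter> ?F = X' \<inter> ?F" using eq unfolding X_def X'_def boot_event_def by auto
  have mX: "measure_pmf.prob ?p X = measure_pmf.prob ?p X'"
    by (metis XX measure_Int_set_pmf)
  have bp: "boot_pmf h L m S (eps m \<beta>) = boot_pmf h L m S' (eps m \<beta>)"
  proof (rule pmf_eqI)
    fix x
    show "pmf (boot_pmf h L m S (eps m \<beta>)) x = pmf (boot_pmf h L m S' (eps m \<beta>)) x"
    proof (cases "x \<in> ?F")
      case True
      hence "x \<in> X \<longleftrightarrow> x \<in> X'" using XX by blast
      thus ?thesis unfolding boot_pmf_def X_def[symmetric] X'_def[symmetric]
        by (simp add: pmf_cond[OF wd] pmf_cond[OF wd'] mX)
    next
      case False
      hence "pmf ?p x = 0" by (simp add: set_pmf_iff)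
      thus ?thesis unfolding boot_pmf_def X_def[symmetric] X'_def[symmetric]
        by (simp add: pmf_cond[OF wd] pmf_cond[OF wd'])
    qed
  qed
  hence mc: "mc_pmf h L m S (eps m \<beta>) B = mc_pmf h L m S' (eps m \<beta>) B"
    unfolding mc_pmf_def by simp
  let ?M = "mc_pmf h L m S' (eps m \<beta>) B"
  have supp: "Js \<in> set_pmf ?M \<Longrightarrow> i < B \<Longrightarrow> Js i \<in> ?F" for Js i
  proof -
    assume Js: "Js \<in> set_pmf ?M" and i: "i < B"
    have "set_pmf ?M = PiE_dflt {..<B} (\<lambda>_. 0) (\<lambda>_. set_pmf (boot_pmf h L m S' (eps m \<beta>)))"
      unfolding mc_pmf_def by (subst set_Pi_pmf) (auto simp: o_def)
    hence "Js i \<in> set_pmf (boot_pmf h L m S' (eps m \<beta>))" using Js i by (auto simp: PiE_dflt_def)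
    thus ?thesis unfolding boot_pmf_def using wd' unfolding X'_def by simp
  qed
  have sets: "{Js. pl_hat h L A m S (eps m \<beta>) B Js \<ge> t} \<inter> set_pmf ?M
            = {Js. pl_hat h L A m S' (eps m \<beta>) B Js \<ge> t} \<inter> set_pmf ?M"
  proof -
    have "pl_hat h L A m S (eps m \<beta>) B Js = pl_hat h L A m S' (eps m \<beta>) B Js" if "Js \<in> set_pmf ?M" for Js
      unfolding pl_hat_def using eq supp[OF that] by (intro arg_cong2[where f="(/)"] sum.cong) auto
    thus ?thesis by auto
  qed
  show ?thesis unfolding mc by (metis sets measure_Int_set_pmf)
qed

lemma integrand_measurable:
  assumes b: "\<beta> \<in> {\<alpha>, \<alpha> - \<gamma>}"
  shows "(\<lambda>S. measure_pmf.prob (mc_pmf h L m S (eps m \<beta>) B) {Js. pl_hat h L A m S (eps m \<beta>) B Js \<ge> t})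
           \<in> borel_measurable (sample_space D m)"
proof -
  let ?F = "set_pmf (resample_pmf m)"
  let ?M = "sample_space D m"
  define g where "g = (\<lambda>S. measure_pmf.prob (mc_pmf h L m S (eps m \<beta>) B) {Js. pl_hat h L A m S (eps m \<beta>) B Js \<ge> t})"
  define \<Phi> where "\<Phi> S = restrict (\<lambda>J. (erm_set h L m (S \<circ> J) (eps m \<beta>) \<noteq> {},
                     erm_set h L m (S \<circ> J) (eps m \<beta>) \<inter> A \<noteq> {})) ?F" for S
  define \<Omega> where "\<Omega> = PiE ?F (\<lambda>_. UNIV :: (bool \<times> bool) set)"
  have fin\<Omega>: "finite \<Omega>" unfolding \<Omega>_def by (intro finite_PiE finite_resample) simp
  have \<Phi>m: "\<Phi> \<in> measurable ?M (count_space \<Omega>)"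
  proof (subst measurable_count_space_eq_countable)
    show "countable \<Omega>" using fin\<Omega> by (rule countable_finite)
    show "\<Phi> \<in> space ?M \<rightarrow> \<Omega> \<and> (\<forall>a\<in>\<Omega>. \<Phi> -` {a} \<inter> space ?M \<in> sets ?M)"
    proof (intro conjI ballI)
      show "\<Phi> \<in> space ?M \<rightarrow> \<Omega>" unfolding \<Phi>_def \<Omega>_def by auto
      fix a assume a: "a \<in> \<Omega>"
      define E where "E J = {S \<in> space ?M. (erm_set h L m (S \<circ> J) (eps m \<beta>) \<noteq> {}) = fst (a J)
             \<and> (erm_set h L m (S \<circ> J) (eps m \<beta>) \<inter> A \<noteq> {}) = snd (a J)}" for J
      have E: "E J \<in> sets ?M" for J
      proof -
        let ?N = "{S \<in> space ?M. erm_set h L m (S \<circ> J) (eps m \<beta>) \<noteq> {}}"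
        let ?I = "{S \<in> space ?M. erm_set h L m (S \<circ> J) (eps m \<beta>) \<inter> A \<noteq> {}}"
        have N: "?N \<in> sets ?M" by (rule meas_ne)
        have I: "?I \<in> sets ?M" by (rule meas_A)
        have "E J = (if fst (a J) then ?N else space ?M - ?N) \<inter> (if snd (a J) then ?I else space ?M - ?I)"
          unfolding E_def by auto
        thus ?thesis using N I by auto
      qed
      have ne: "?F \<noteq> {}" by (rule set_pmf_not_empty)
      have eqs: "\<Phi> -` {a} \<inter> space ?M = space ?M \<inter> (\<Inter>J\<in>?F. E J)"
      proof (intro equalityI subsetI)
        fix S assume "S \<in> \<Phi> -` {a} \<inter> space ?M"
        hence S: "S \<in> space ?M" "\<Phi> S = a" by auto
        have "S \<in> E J" if "J \<in> ?F" for J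
        proof -
          have "\<Phi> S J = a J" using S by simp
          thus ?thesis using that S unfolding \<Phi>_def E_def by auto
        qed
        thus "S \<in> space ?M \<inter> (\<Inter>J\<in>?F. E J)" using S by auto
      next
        fix S assume S: "S \<in> space ?M \<inter> (\<Inter>J\<in>?F. E J)"
        have "\<Phi> S = a"
        proof (rule ext)
          fix J show "\<Phi> S J = a J"
          proof (cases "J \<in> ?F")
            case True
            thus ?thesis using S unfolding \<Phi>_def E_def by (auto intro: prod_eqI)
          next
            case False
            thus ?thesis using a unfolding \<Phi>_def \<Omega>_def by (auto simp: PiE_def extensional_def)
          qed
        qed
        thus "S \<in> \<Phi> -` {a} \<inter> space ?M" using S by auto
      qed
      have "(\<Inter>J\<in>?F. E J) \<in> sets ?M"
        by (rule sets.finite_INT[OF finite_resample ne]) (rule E)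
      thus "\<Phi> -` {a} \<inter> space ?M \<in> sets ?M" unfolding eqs by auto
    qed
  qed
  define G where "G \<phi> = g (SOME S. S \<in> space ?M \<and> \<Phi> S = \<phi>)" for \<phi>
  have Gm: "(\<lambda>S. G (\<Phi> S)) \<in> borel_measurable ?M"
    by (rule measurable_compose[OF \<Phi>m]) simp
  have geq: "g S = G (\<Phi> S)" if S: "S \<in> space ?M" for S
  proof -
    define S' where "S' = (SOME S'. S' \<in> space ?M \<and> \<Phi> S' = \<Phi> S)"
    have "S' \<in> space ?M \<and> \<Phi> S' = \<Phi> S" unfolding S'_def by (rule someI[of _ S]) (use S in simp)
    hence S': "S' \<in> space ?M" "\<Phi> S' = \<Phi> S" by auto
    have eq: "\<forall>J\<in>?F.
       (erm_set h L m (S \<circ> J) (eps m \<beta>) \<noteq> {}) = (erm_set h L m (S' \<circ> J) (eps m \<beta>) \<noteq> {}) \<and>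
       (erm_set h L m (S \<circ> J) (eps m \<beta>) \<inter> A \<noteq> {}) = (erm_set h L m (S' \<circ> J) (eps m \<beta>) \<inter> A \<noteq> {})"
    proof
      fix J assume J: "J \<in> ?F"
      have "\<Phi> S' J = \<Phi> S J" using S' by simp
      thus "(erm_set h L m (S \<circ> J) (eps m \<beta>) \<noteq> {}) = (erm_set h L m (S' \<circ> J) (eps m \<beta>) \<noteq> {}) \<and>
       (erm_set h L m (S \<circ> J) (eps m \<beta>) \<inter> A \<noteq> {}) = (erm_set h L m (S' \<circ> J) (eps m \<beta>) \<inter> A \<noteq> {})"
        using J unfolding \<Phi>_def by simp
    qed
    have "g S = g S'" unfolding g_def by (rule integrand_invariant[OF b S S'(1) eq])
    thus ?thesis unfolding G_def S'_def by simp
  qed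
  have "g \<in> borel_measurable ?M"
    by (rule measurable_cong[THEN iffD2, OF _ Gm]) (use geq in simp)
  thus ?thesis unfolding g_def .
qed

lemma main_bound:
  assumes b: "\<beta> \<in> {\<alpha>, \<alpha> - \<gamma>}" "0 < \<beta>" "\<beta> < 1" and B: "0 < B" and g: "0 \<le> g"
  shows "\<exists>M. \<forall>m\<ge>M. prob_pl_hat_ge D h L A m (eps m \<beta>) B (1 - \<beta> - g)
                     \<ge> (1 - \<beta>) * (1 - exp (-2 * real B * g^2))"
proof -
  obtain \<delta> where \<delta>: "0 < \<delta>" "risk_set D h L \<delta> \<subseteq> A" using A_contains by blast
  obtain M0 where M0: "\<forall>m\<ge>M0. eps m \<beta> < ereal (\<delta>/3)"
    using eps_eventually[OF b(2), of "\<delta>/3"] \<delta> by auto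
  show ?thesis
  proof (intro exI[of _ "max M0 1"] allI impI)
    fix m assume mM: "max M0 1 \<le> m"
    have m: "0 < m" using mM by simp
    have le: "eps m \<beta> < ereal (\<delta>/3)" using M0 mM by simp
    let ?M = "sample_space D m"
    interpret P: prob_space ?M by (rule prob_ss)
    define G where "G = {S \<in> space ?M. \<forall>\<theta>. \<bar>risk D h L \<theta> - emp_risk h L m S \<theta>\<bar> \<le> \<delta>/6}"
    have Gs: "G \<in> sets ?M" unfolding G_def by (rule meas_uc)
    have gu: "guar m (\<delta>/6) \<beta>" using eps_guar[OF le b(2) m] by simp
    have pG: "measure ?M G \<ge> 1 - \<beta>" using gu unfolding guar_def G_def by blast
    define c where "c = 1 - exp (-2 * real B * g^2)"
    have c0: "0 \<le> c" unfolding c_def by simp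
    define f where "f = (\<lambda>S. measure_pmf.prob (mc_pmf h L m S (eps m \<beta>) B)
                           {Js. pl_hat h L A m S (eps m \<beta>) B Js \<ge> 1 - \<beta> - g})"
    have fm: "f \<in> borel_measurable ?M" unfolding f_def by (rule integrand_measurable[OF b(1)])
    have fi: "integrable ?M f"
      by (rule P.integrable_const_bound[where B=1]) (use fm in \<open>auto simp: f_def\<close>)
    have fG: "c \<le> f S" if S: "S \<in> G" for S
    proof -
      have Ssp: "S \<in> space ?M" using S unfolding G_def by blast
      have U: "\<forall>\<theta>. \<bar>risk D h L \<theta> - emp_risk h L m S \<theta>\<bar> \<le> \<delta>/6" using S unfolding G_def by blast
      have pl: "pl_boot h L A m S (eps m \<beta>) \<ge> 1 - \<beta>" by (rule pl_good[OF b m \<delta> le Ssp U])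
      have "1 - exp (-2 * real B * g^2) \<le> measure_pmf.prob (Pi_pmf {..<B} (\<lambda>_. 0) (\<lambda>_. boot_pmf h L m S (eps m \<beta>)))
           {Js. (\<Sum>i<B. if erm_set h L m (S \<circ> Js i) (eps m \<beta>) \<inter> A \<noteq> {} then 1 else 0) / real B \<ge> 1 - \<beta> - g}"
        by (rule mc_bound[OF B _ g]) (use pl in \<open>simp add: pl_boot_def o_def\<close>)
      thus ?thesis unfolding f_def c_def mc_pmf_def pl_hat_def .
    qed
    have Gi: "integrable ?M (indicator G :: _ \<Rightarrow> real)"
      by (rule integrable_real_indicator[OF Gs]) (simp add: P.emeasure_finite less_top[symmetric])
    have "(1 - \<beta>) * c \<le> measure ?M G * c" using pG c0 by (rule mult_right_mono)
    also have "\<dots> = (\<integral>S. indicator G S * c \<partial>?M)"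
      using Gs Gi by simp
    also have "\<dots> \<le> (\<integral>S. f S \<partial>?M)"
    proof (rule integral_mono)
      show "integrable ?M (\<lambda>S. indicator G S * c)" using Gi by simp
      show "integrable ?M f" by (rule fi)
      fix S assume "S \<in> space ?M"
      show "indicator G S * c \<le> f S"
        using fG[of S] unfolding f_def by (auto simp: indicator_def)
    qed
    finally show "prob_pl_hat_ge D h L A m (eps m \<beta>) B (1 - \<beta> - g) \<ge> (1 - \<beta>) * (1 - exp (-2 * real B * g^2))"
      unfolding prob_pl_hat_ge_def f_def c_def by simp
  qed
qed

lemma prob_pl_hat_ge_nonneg: "0 \<le> prob_pl_hat_ge D h L A m e B t"
  unfolding prob_pl_hat_ge_def by (rule integral_nonneg_AE) simp

lemma liminf_ge:
  assumes "\<exists>M. \<forall>m\<ge>M. c \<le> f m"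
  shows "ereal c \<le> liminf (\<lambda>m. ereal (f m))"
proof (rule Liminf_bounded)
  from assms obtain M where "\<forall>m\<ge>M. c \<le> f m" by blast
  thus "eventually (\<lambda>m. ereal c \<le> ereal (f m)) sequentially"
    by (auto simp: eventually_sequentially)
qed

end
theorem theorem5:
  fixes D :: "('x \<times> 'y) measure"
    and h :: "'x \<Rightarrow> 'p::topological_space \<Rightarrow> 'o"
    and L :: "'o \<Rightarrow> 'y \<Rightarrow> real"
    and A :: "'p set"
    and eps :: "nat \<Rightarrow> real \<Rightarrow> ereal"
    and \<alpha> \<gamma> :: real
    and B :: nat
  assumes D: "prob_space D"
    and risk_finite: "\<And>\<theta>. integrable D (loss h L \<theta>)"
    and A_borel: "A \<in> sets borel"
    and A_contains: "\<exists>\<delta>>0. risk_set D h L \<delta> \<subseteq> A"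
    and suc: "strong_uc D h L"
    and cases:
      "((\<exists>\<theta>0. \<forall>\<theta>. risk D h L \<theta>0 \<le> risk D h L \<theta>)
          \<and> (\<forall>m S. (\<forall>i<m. S i \<in> space D) \<longrightarrow> (\<exists>\<theta>. \<forall>\<phi>. emp_risk h L m S \<theta> \<le> emp_risk h L m S \<phi>))
          \<and> eps = eps_a D h L)
       \<or> eps = eps_b D h L"
    and meas_uc: "\<And>m \<epsilon>. {S \<in> space (sample_space D m).
                     \<forall>\<theta>. \<bar>risk D h L \<theta> - emp_risk h L m S \<theta>\<bar> \<le> \<epsilon>} \<in> sets (sample_space D m)"
    and meas_ne: "\<And>m \<epsilon> J. {S \<in> space (sample_space D m). erm_set h L m (S \<circ> J) \<epsilon> \<noteq> {}}
                     \<in> sets (sample_space D m)"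
    and meas_A: "\<And>m \<epsilon> J. {S \<in> space (sample_space D m). erm_set h L m (S \<circ> J) \<epsilon> \<inter> A \<noteq> {}}
                     \<in> sets (sample_space D m)"
    and well_defined: "\<And>m S \<beta>. S \<in> space (sample_space D m) \<Longrightarrow> \<beta> \<in> {\<alpha>, \<alpha> - \<gamma>} \<Longrightarrow>
                     set_pmf (resample_pmf m) \<inter> boot_event h L m S (eps m \<beta>) \<noteq> {}"
    and \<gamma>_pos: "0 < \<gamma>" and \<gamma>_less: "\<gamma> < \<alpha>"
  shows "liminf (\<lambda>m. ereal (prob_pl_hat_ge D h L A m (eps m \<alpha>) B (1 - \<alpha> - \<gamma>)))
           \<ge> ereal (1 - \<alpha> - exp (- (6 * real B * \<gamma>\<^sup>2) / (4 * \<gamma> + 3)))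
       \<and> (real B \<ge> (4 * \<gamma> + 3) * ln (1 / \<gamma>) / (6 * \<gamma>\<^sup>2) \<longrightarrow>
            liminf (\<lambda>m. ereal (prob_pl_hat_ge D h L A m (eps m (\<alpha> - \<gamma>)) B (1 - \<alpha>)))
              \<ge> ereal (1 - \<alpha>))"
proof -
  interpret T: thm5 D h L A eps \<alpha> \<gamma>
    by (rule thm5.intro) (use D A_contains suc cases meas_uc meas_ne meas_A well_defined in auto)
  have a0: "0 < \<alpha>" using \<gamma>_pos \<gamma>_less by simp
  have nn: "\<forall>m. 0 \<le> prob_pl_hat_ge D h L A m e B t" for e t
    using T.prob_pl_hat_ge_nonneg by blast
  have triv: "ereal c \<le> liminf (\<lambda>m. ereal (prob_pl_hat_ge D h L A m (e m) B t))" if "c \<le> 0" for c e t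
    by (rule T.liminf_ge, rule exI[of _ 0], intro allI impI, rule order_trans[OF that T.prob_pl_hat_ge_nonneg])
  define E1 where "E1 = exp (- (6 * real B * \<gamma>\<^sup>2) / (4 * \<gamma> + 3))"
  define E2 where "E2 = exp (-2 * real B * \<gamma>^2)"
  have E1pos: "0 < E1" unfolding E1_def by simp
  have E21: "E2 \<le> E1"
  proof -
    have p: "0 < 4 * \<gamma> + 3" using \<gamma>_pos by simp
    have "6 * (real B * \<gamma>\<^sup>2) \<le> (2 * (real B * \<gamma>\<^sup>2)) * (4 * \<gamma> + 3)"
      using \<gamma>_pos by (simp add: algebra_simps)
    hence "(6 * real B * \<gamma>\<^sup>2) / (4 * \<gamma> + 3) \<le> 2 * real B * \<gamma>^2"
      using p by (simp add: divide_le_eq algebra_simps)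
    thus ?thesis unfolding E1_def E2_def by simp
  qed
  have claim1: "liminf (\<lambda>m. ereal (prob_pl_hat_ge D h L A m (eps m \<alpha>) B (1 - \<alpha> - \<gamma>)))
           \<ge> ereal (1 - \<alpha> - E1)"
  proof (cases "\<alpha> < 1 \<and> 0 < B")
    case True
    obtain M where M: "\<forall>m\<ge>M. prob_pl_hat_ge D h L A m (eps m \<alpha>) B (1 - \<alpha> - \<gamma>)
                     \<ge> (1 - \<alpha>) * (1 - E2)"
      using T.main_bound[of \<alpha> B \<gamma>] True a0 \<gamma>_pos unfolding E2_def by auto
    have "1 - \<alpha> - E1 \<le> (1 - \<alpha>) * (1 - E2)"
    proof -
      have "0 \<le> \<alpha> * E2" using a0 unfolding E2_def by simp
      thus ?thesis using E21 by (simp add: algebra_simps)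
    qed
    thus ?thesis using M by (intro T.liminf_ge) (auto intro: order_trans)
  next
    case False
    hence "\<not> \<alpha> < 1 \<or> \<not> 0 < B" by auto
    hence "1 - \<alpha> - E1 \<le> 0"
    proof
      assume "\<not> (\<alpha> < 1)" thus ?thesis using E1pos by simp
    next
      assume "\<not> 0 < B" hence "B = 0" by simp
      thus ?thesis using a0 unfolding E1_def by simp
    qed
    thus ?thesis by (intro triv)
  qed
  have claim2: "liminf (\<lambda>m. ereal (prob_pl_hat_ge D h L A m (eps m (\<alpha> - \<gamma>)) B (1 - \<alpha>))) \<ge> ereal (1 - \<alpha>)"
    if hB: "real B \<ge> (4 * \<gamma> + 3) * ln (1 / \<gamma>) / (6 * \<gamma>\<^sup>2)"
  proof (cases "\<alpha> < 1")
    case False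
    thus ?thesis by (intro triv) simp
  next
    case True
    have g1: "\<gamma> < 1" using True \<gamma>_less by simp
    have lnpos: "0 < ln (1 / \<gamma>)" using g1 \<gamma>_pos by simp
    have pos: "0 < (4 * \<gamma> + 3) * ln (1 / \<gamma>) / (6 * \<gamma>\<^sup>2)" using lnpos \<gamma>_pos by simp
    hence B: "0 < B" using hB by linarith
    have "ln (1 / \<gamma>) \<le> 2 * real B * \<gamma>^2"
    proof -
      define X where "X = (4 * \<gamma> + 3) * ln (1 / \<gamma>) / (6 * \<gamma>\<^sup>2)"
      have "ln (1 / \<gamma>) \<le> (4 * \<gamma> + 3) * ln (1 / \<gamma>) / 3"
        using lnpos \<gamma>_pos by (simp add: field_simps)
      also have "\<dots> = 2 * \<gamma>^2 * X"
        unfolding X_def using \<gamma>_pos by (simp add: field_simps power2_eq_square)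
      also have "\<dots> \<le> 2 * \<gamma>^2 * real B"
        using hB \<gamma>_pos unfolding X_def by (intro mult_left_mono) auto
      also have "\<dots> = 2 * real B * \<gamma>^2" by simp
      finally show ?thesis .
    qed
    hence "E2 \<le> exp (- ln (1 / \<gamma>))" unfolding E2_def by simp
    also have "exp (- ln (1 / \<gamma>)) = \<gamma>" using \<gamma>_pos by (simp add: ln_div)
    finally have E2g: "E2 \<le> \<gamma>" .
    have b: "\<alpha> - \<gamma> \<in> {\<alpha>, \<alpha> - \<gamma>}" "0 < \<alpha> - \<gamma>" "\<alpha> - \<gamma> < 1" using \<gamma>_less \<gamma>_pos True by auto
    obtain M where M: "\<forall>m\<ge>M. prob_pl_hat_ge D h L A m (eps m (\<alpha> - \<gamma>)) B (1 - (\<alpha> - \<gamma>) - \<gamma>)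
                     \<ge> (1 - (\<alpha> - \<gamma>)) * (1 - E2)"
      using T.main_bound[OF b B, of \<gamma>] \<gamma>_pos unfolding E2_def by auto
    have "1 - \<alpha> \<le> (1 - (\<alpha> - \<gamma>)) * (1 - E2)"
    proof -
      have "0 \<le> (\<alpha> - \<gamma>) * E2" using b unfolding E2_def by simp
      thus ?thesis using E2g by (simp add: algebra_simps)
    qed
    moreover have "1 - (\<alpha> - \<gamma>) - \<gamma> = 1 - \<alpha>" by simp
    ultimately show ?thesis using M by (intro T.liminf_ge) (auto intro: order_trans)
  qed
  show ?thesis using claim1 claim2 unfolding E1_def by blast
qed

end
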